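(* Let $n\ge1$, $K=\mathbb{R}^n_+$, and $\bar x\in K\cap\mathbb{Z}^n\setminus\{0\}$. Then $$Q(\bar x)=\Big\{x\in\mathbb{R}^n:\ x_i\ge0\ (i=1,\dots,n),\ \ \sum_{i=1}^k d^k_i x_i\ge\sum_{i=1}^k d^k_i\bar x_i\ (k=1,\dots,n)\Big\}.$$
   Context: Lexicographic order: for $x,y\in\mathbb{R}^n$, $x\prec y$ iff $x\ne y$ and $x_i<y_i$ for the smallest index $i$ with $x_i\ne y_i$; $\succeq$ has the obvious meaning. $Q(\bar x):=\operatorname{conv}\{x\in K\cap\mathbb{Z}^n: x\succeq\bar x\}$. For $k\in\{1,\dots,n\}$ and $i\in\{1,\dots,k\}$: $d^k_k=1$; $d^k_{k-1}=\bar x_k$ (if $k\ge2$); and $d^k_i=\bar x_k\prod_{j=i+1}^{k-1}(\bar x_j+1)$ for $i\le k-2$. The inequality $\sum_{i=1}^k d^k_i x_i\ge\sum_{i=1}^k d^k_i\bar x_i$ is called the $k$-th lex-cut associated with $\bar x$. *)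

theory Defs
  imports "HOL-Analysis.Analysis"
begin

text \<open>Vectors of R^n are modelled as real^'n, where the index type 'n is finite and
linearly ordered (isomorphic to {1..n} with its usual order).\<close>

definition lex_less :: "real^'n::{finite,linorder} \<Rightarrow> real^'n::{finite,linorder} \<Rightarrow> bool" where
  "lex_less x y \<longleftrightarrow> x \<noteq> y \<and> (\<exists>i. x$i < y$i \<and> (\<forall>j<i. x$j = y$j))"

definition lex_ge :: "real^'n::{finite,linorder} \<Rightarrow> real^'n::{finite,linorder} \<Rightarrow> bool" where
  "lex_ge x y \<longleftrightarrow> x = y \<or> lex_less y x"

definition nonneg_orthant :: "(real^'n::{finite,linorder}) set" where
  "nonneg_orthant = {x. \<forall>i. 0 \<le> x$i}"

definition is_int_vec :: "real^'n::{finite,linorder} \<Rightarrow> bool" where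
  "is_int_vec x \<longleftrightarrow> (\<forall>i. x$i \<in> \<int>)"

definition Qset :: "(real^'n::{finite,linorder}) set \<Rightarrow> real^'n::{finite,linorder} \<Rightarrow> (real^'n::{finite,linorder}) set" where
  "Qset K xb = convex hull {x \<in> K. is_int_vec x \<and> lex_ge x xb}"

text \<open>Lex-cut coefficients d^k_i (for i \<le> k); d^k_k = 1, otherwise
  xb_k * prod_{i<j<k} (xb_j + 1) (empty product = 1 gives d^k_{k-1} = xb_k).\<close>
definition lexcut_coeff :: "real^'n::{finite,linorder} \<Rightarrow> 'n::{finite,linorder} \<Rightarrow> 'n::{finite,linorder} \<Rightarrow> real" where
  "lexcut_coeff xb k i = (if i = k then 1 else xb$k * (\<Prod>j\<in>{i<..<k}. xb$j + 1))"

end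

theory Submission
  imports Defs
begin

definition NN :: "('n::{finite,linorder} \<Rightarrow> real) \<Rightarrow> ('n \<Rightarrow> real) \<Rightarrow> 'n set \<Rightarrow> real" where
  "NN a y D = (\<Prod>j\<in>D. a j + 1) - (\<Sum>i\<in>D. y i * (\<Prod>j\<in>{j\<in>D. i<j}. a j + 1))"

lemma NN_empty: "NN a y {} = 1" by (simp add: NN_def)

lemma NN_insert:
  fixes D :: "'n::{finite,linorder} set"
  assumes "\<forall>d\<in>D. d < b"
  shows "NN a y (insert b D) = (a b + 1) * NN a y D - y b"
proof -
  have bD: "b \<notin> D" using assms by auto
  have e1: "{j\<in>insert b D. b<j} = {}" using assms by auto
  have e2: "\<And>i. i \<in> D \<Longrightarrow> {j\<in>insert b D. i<j} = insert b {j\<in>D. i<j}" using assms by auto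
  have s: "(\<Sum>i\<in>D. y i * (\<Prod>j\<in>{j\<in>insert b D. i<j}. a j + 1)) =
      (a b + 1) * (\<Sum>i\<in>D. y i * (\<Prod>j\<in>{j\<in>D. i<j}. a j + 1))"
    unfolding sum_distrib_left
  proof (rule sum.cong[OF refl])
    fix i assume iD: "i \<in> D"
    have "(\<Prod>j\<in>{j\<in>insert b D. i<j}. a j + 1) = (a b + 1) * (\<Prod>j\<in>{j\<in>D. i<j}. a j + 1)"
      unfolding e2[OF iD] using bD by simp
    then show "y i * (\<Prod>j\<in>{j\<in>insert b D. i<j}. a j + 1) = (a b + 1) * (y i * (\<Prod>j\<in>{j\<in>D. i<j}. a j + 1))"
      by simp
  qed
  have fD: "finite D" by simp
  show ?thesis unfolding NN_def sum.insert[OF fD bD] prod.insert[OF fD bD] e1 s prod.empty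
    by (simp add: algebra_simps)
qed

lemma NN_cong: "(\<And>j. j \<in> D \<Longrightarrow> y j = y' j) \<Longrightarrow> NN a y D = NN a y' D"
  unfolding NN_def by (auto intro!: sum.cong)

lemma downset_induct:
  fixes P :: "'n::{finite,linorder} set \<Rightarrow> bool"
  assumes "P {}" and step: "\<And>b. P {..<b} \<Longrightarrow> P {..b}"
    and dc: "\<And>d j. d \<in> D \<Longrightarrow> j < d \<Longrightarrow> j \<in> D"
  shows "P D"
proof -
  have "finite D" by simp
  have "\<forall>A. finite A \<longrightarrow> (\<forall>d j. d \<in> A \<longrightarrow> j < d \<longrightarrow> j \<in> A) \<longrightarrow> P A"
  proof (intro allI impI)
    fix A :: "'n set" assume "finite A" "\<forall>d j. d \<in> A \<longrightarrow> j < d \<longrightarrow> j \<in> A"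
    then show "P A"
    proof (induct A rule: finite_linorder_max_induct)
      case empty then show ?case using assms(1) by simp
    next
      case (insert b A)
      have A: "A = {..<b}"
      proof
        show "A \<subseteq> {..<b}" using insert(2) by auto
        show "{..<b} \<subseteq> A"
        proof
          fix j assume "j \<in> {..<b}"
          then have "j < b" by simp
          then have "j \<in> insert b A" using insert(4) by blast
          then show "j \<in> A" using \<open>j<b\<close> by auto
        qed
      qed
      have dA: "\<forall>d j. d \<in> A \<longrightarrow> j < d \<longrightarrow> j \<in> A" using A by auto
      have "P A" using insert(3) dA by blast
      then have "P {..b}" using A step by simp
      moreover have "insert b A = {..b}" using A by auto
      ultimately show ?case by simp
    qed
  qed
  moreover have "\<forall>d j. d \<in> D \<longrightarrow> j < d \<longrightarrow> j \<in> D" using dc by blast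
  ultimately show ?thesis using \<open>finite D\<close> by blast
qed

lemma NN_self: "NN a a (D::'n::{finite,linorder} set) = 1"
proof -
  have "finite D" by simp
  then show ?thesis
  proof (induct D rule: finite_linorder_max_induct)
    case empty then show ?case by (simp add: NN_empty)
  next
    case (insert b A) then show ?case by (simp add: NN_insert)
  qed
qed

lemma atMost_insert': "{..(k::'n::linorder)} = insert k {..<k}" by auto

lemma NN_atMost: "NN a y {..(k::'n::{finite,linorder})} = (a k + 1) * NN a y {..<k} - y k"
  unfolding atMost_insert' by (rule NN_insert) auto

lemma cut_sum:
  fixes xb y :: "real^'n::{finite,linorder}"
  shows "(\<Sum>i\<in>{..k}. lexcut_coeff xb k i * y$i) =
     y$k + xb$k * ((\<Prod>j\<in>{..<k}. xb$j + 1) - NN (\<lambda>j. xb$j) (\<lambda>j. y$j) {..<k})"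
proof -
  have e: "\<And>i. i < k \<Longrightarrow> {j\<in>{..<k}. i<j} = {i<..<k}" by auto
  have "(\<Sum>i\<in>{..k}. lexcut_coeff xb k i * y$i) = y$k + (\<Sum>i\<in>{..<k}. lexcut_coeff xb k i * y$i)"
    unfolding atMost_insert' by (simp add: lexcut_coeff_def)
  also have "(\<Sum>i\<in>{..<k}. lexcut_coeff xb k i * y$i) = xb$k * (\<Sum>i\<in>{..<k}. y$i * (\<Prod>j\<in>{j\<in>{..<k}. i<j}. xb$j + 1))"
    unfolding sum_distrib_left
  proof (rule sum.cong[OF refl])
    fix i assume "i \<in> {..<k}"
    then have ik: "i < k" by simp
    show "lexcut_coeff xb k i * y$i = xb$k * (y$i * (\<Prod>j\<in>{j\<in>{..<k}. i<j}. xb$j + 1))"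
      unfolding e[OF ik] using ik by (simp add: lexcut_coeff_def)
  qed
  finally show ?thesis unfolding NN_def by simp
qed

lemma cut_iff:
  fixes xb x :: "real^'n::{finite,linorder}"
  shows "(\<Sum>i\<in>{..k}. lexcut_coeff xb k i * xb$i) \<le> (\<Sum>i\<in>{..k}. lexcut_coeff xb k i * x$i)
     \<longleftrightarrow> xb$k * NN (\<lambda>j. xb$j) (\<lambda>j. x$j) {..<k} \<le> x$k"
  unfolding cut_sum NN_self by (simp add: algebra_simps)


lemma lex_less_trans:
  fixes x y z :: "real^'n::{finite,linorder}"
  assumes "lex_less x y" "lex_less y z" shows "lex_less x z"
proof -
  obtain i where i: "x$i < y$i" "\<forall>j<i. x$j = y$j" using assms(1) unfolding lex_less_def by blast
  obtain k where k: "y$k < z$k" "\<forall>j<k. y$j = z$j" using assms(2) unfolding lex_less_def by blast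
  have "\<exists>m. x$m < z$m \<and> (\<forall>j<m. x$j = z$j)"
  proof (cases i k rule: linorder_cases)
    case less then show ?thesis using i k by (intro exI[of _ i]) auto
  next
    case equal then show ?thesis using i k by (intro exI[of _ i]) auto
  next
    case greater then show ?thesis using i k by (intro exI[of _ k]) auto
  qed
  then obtain m where "x$m < z$m" "\<forall>j<m. x$j = z$j" by blast
  then show ?thesis unfolding lex_less_def by auto
qed

lemma le_lex:
  fixes x y :: "real^'n::{finite,linorder}"
  assumes le: "\<forall>i. x$i \<le> y$i" and ne: "x \<noteq> y" shows "lex_less x y"
proof -
  define D where "D = {j. x$j \<noteq> y$j}"
  have "D \<noteq> {}" using ne unfolding D_def by (auto simp: vec_eq_iff)
  have fD: "finite D" by simp
  define i where "i = Min D"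
  have iD: "i \<in> D" using Min_in[OF fD \<open>D \<noteq> {}\<close>] i_def by simp
  have "\<forall>j<i. x$j = y$j"
  proof (intro allI impI)
    fix j assume "j < i"
    show "x$j = y$j"
    proof (rule ccontr)
      assume "x$j \<noteq> y$j"
      then have "j \<in> D" unfolding D_def by simp
      then have "i \<le> j" unfolding i_def using fD by simp
      then show False using \<open>j<i\<close> by simp
    qed
  qed
  moreover have "x$i < y$i" using iD le unfolding D_def by (simp add: order_less_le)
  ultimately show ?thesis unfolding lex_less_def using ne by blast
qed

lemma lex_ge_mono:
  fixes x y b :: "real^'n::{finite,linorder}"
  assumes "\<forall>i. x$i \<le> y$i" "lex_ge x b" shows "lex_ge y b"
proof (cases "x = y")
  case True then show ?thesis using assms by simp
next
  case False
  then have xy: "lex_less x y" using le_lex assms(1) by blast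
  show ?thesis using assms(2) unfolding lex_ge_def
    using xy lex_less_trans by blast
qed

definition SS :: "real^'n::{finite,linorder} \<Rightarrow> (real^'n::{finite,linorder}) set" where
  "SS xb = {x \<in> nonneg_orthant. is_int_vec x \<and> lex_ge x xb}"

lemma SS_shift:
  assumes "s \<in> SS xb" shows "s + real T *\<^sub>R axis i 1 \<in> SS xb"
proof -
  have le: "\<forall>j. s$j \<le> (s + real T *\<^sub>R axis i 1)$j" by (simp add: axis_def)
  have "s + real T *\<^sub>R axis i 1 \<in> nonneg_orthant"
    using assms le unfolding SS_def nonneg_orthant_def by (auto intro: order_trans)
  moreover have "is_int_vec (s + real T *\<^sub>R axis i 1)"
    using assms unfolding SS_def is_int_vec_def by (auto simp: axis_def)
  moreover have "lex_ge (s + real T *\<^sub>R axis i 1) xb"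
    using assms le lex_ge_mono unfolding SS_def by blast
  ultimately show ?thesis unfolding SS_def by simp
qed

lemma C_shift:
  assumes p: "p \<in> convex hull SS xb" and t: "0 \<le> t"
  shows "p + t *\<^sub>R axis i 1 \<in> convex hull SS xb"
proof -
  define T where "T = nat \<lceil>t\<rceil>"
  have tT: "t \<le> real T" unfolding T_def by linarith
  have sub: "(\<lambda>x. real T *\<^sub>R axis i 1 + x) ` SS xb \<subseteq> SS xb"
    using SS_shift by (auto simp: add.commute)
  have "real T *\<^sub>R axis i 1 + p \<in> (\<lambda>x. real T *\<^sub>R axis i 1 + x) ` (convex hull SS xb)"
    using p by blast
  also have "\<dots> = convex hull ((\<lambda>x. real T *\<^sub>R axis i 1 + x) ` SS xb)"
    by (rule convex_hull_translation[symmetric])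
  also have "\<dots> \<subseteq> convex hull SS xb" using sub by (rule hull_mono)
  finally have q: "p + real T *\<^sub>R axis i 1 \<in> convex hull SS xb" by (simp add: add.commute)
  show ?thesis
  proof (cases "t = 0")
    case True then show ?thesis using p by simp
  next
    case False
    then have Tpos: "real T > 0" using t tT by linarith
    define u where "u = t / real T"
    have u0: "0 \<le> u" "u \<le> 1" unfolding u_def using t tT Tpos by auto
    have "(1 - u) *\<^sub>R p + u *\<^sub>R (p + real T *\<^sub>R axis i 1) \<in> convex hull SS xb"
      using convexD_alt[OF convex_convex_hull p q u0] by simp
    moreover have "(1 - u) *\<^sub>R p + u *\<^sub>R (p + real T *\<^sub>R axis i 1) = p + t *\<^sub>R axis i 1"
      unfolding u_def using Tpos by (simp add: algebra_simps)
    ultimately show ?thesis by simp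
  qed
qed

lemma C_up:
  fixes p w :: "real^'n::{finite,linorder}"
  assumes p: "p \<in> convex hull SS xb" and w: "\<forall>i. 0 \<le> w$i"
  shows "p + w \<in> convex hull SS xb"
proof -
  have "\<And>F. finite F \<Longrightarrow> p + (\<chi> i. if i \<in> F then w$i else 0) \<in> convex hull SS xb"
  proof -
    fix F :: "'n set" assume "finite F"
    then show "p + (\<chi> i. if i \<in> F then w$i else 0) \<in> convex hull SS xb"
    proof (induct F rule: finite_induct)
      case empty
      have "(\<chi> i. if i \<in> {} then w$i else 0) = 0" by (simp add: vec_eq_iff)
      then show ?case using p by simp
    next
      case (insert j F)
      have "p + (\<chi> i. if i \<in> insert j F then w$i else 0) =
        (p + (\<chi> i. if i \<in> F then w$i else 0)) + (w$j) *\<^sub>R axis j 1"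
        using insert(2) by (auto simp: vec_eq_iff axis_def)
      moreover have "(p + (\<chi> i. if i \<in> F then w$i else 0)) + (w$j) *\<^sub>R axis j 1 \<in> convex hull SS xb"
        using C_shift[OF insert(3)] w by blast
      ultimately show ?case by (metis add.assoc)
    qed
  qed
  from this[of UNIV] have "p + (\<chi> i. if i \<in> UNIV then w$i else 0) \<in> convex hull SS xb" by simp
  moreover have "(\<chi> i. if i \<in> UNIV then w$i else 0) = w" by (simp add: vec_eq_iff)
  ultimately show ?thesis by simp
qed


lemma sum_UNIV_option: "sum f (UNIV :: 'a::finite option set) = f None + sum (\<lambda>k. f (Some k)) UNIV"
proof -
  have "sum f (UNIV :: 'a option set) = f None + sum f (range Some)"
    unfolding UNIV_option_conv by (subst sum.insert) auto
  also have "sum f (range Some) = sum (\<lambda>k. f (Some k)) UNIV"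
    by (subst sum.reindex) auto
  finally show ?thesis .
qed

lemma Ints_step: "(a::real) \<in> \<int> \<Longrightarrow> b \<in> \<int> \<Longrightarrow> a < b \<Longrightarrow> a + 1 \<le> b"
proof -
  assume "a \<in> \<int>" "b \<in> \<int>" "a < b"
  then have "b - a \<in> \<int>" by simp
  then obtain n where n: "b - a = of_int n" by (auto elim: Ints_cases)
  then have "n > 0" using \<open>a<b\<close> by linarith
  then have "(of_int n::real) \<ge> 1" by simp
  then show "a + 1 \<le> b" using n by linarith
qed

lemma SS_sub_P:
  fixes xb :: "real^'n::{finite,linorder}"
  assumes xb0: "xb \<in> nonneg_orthant" and xbi: "is_int_vec xb" and x: "x \<in> SS xb"
  shows "(\<Sum>i\<in>{..k}. lexcut_coeff xb k i * xb$i) \<le> (\<Sum>i\<in>{..k}. lexcut_coeff xb k i * x$i)"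
proof -
  let ?a = "\<lambda>j. xb$j" and ?x = "\<lambda>j. x$j"
  have x0: "\<forall>i. 0 \<le> x$i" and xi: "is_int_vec x" and xg: "lex_ge x xb"
    using x unfolding SS_def nonneg_orthant_def by auto
  have a0: "\<forall>i. 0 \<le> xb$i" using xb0 unfolding nonneg_orthant_def by auto
  show ?thesis unfolding cut_iff
  proof (cases "x = xb")
    case True then show "xb$k * NN ?a ?x {..<k} \<le> x$k" by (simp add: NN_self)
  next
    case False
    then have "lex_less xb x" using xg unfolding lex_ge_def by auto
    then obtain m where m1: "xb$m < x$m" and m2: "\<forall>j<m. xb$j = x$j" unfolding lex_less_def by blast
    have m3: "xb$m + 1 \<le> x$m" using Ints_step m1 xi xbi unfolding is_int_vec_def by blast
    have N1: "NN ?a ?x {..<m} = 1"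
    proof -
      have "NN ?a ?x {..<m} = NN ?a ?a {..<m}" by (rule NN_cong) (use m2 in auto)
      then show ?thesis by (simp add: NN_self)
    qed
    show "xb$k * NN ?a ?x {..<k} \<le> x$k"
    proof (cases k m rule: linorder_cases)
      case less
      have "NN ?a ?x {..<k} = NN ?a ?a {..<k}" by (rule NN_cong) (use m2 less in auto)
      then show ?thesis using m2 less by (simp add: NN_self)
    next
      case equal then show ?thesis using N1 m1 by simp
    next
      case greater
      have "\<forall>D. (\<forall>d j. d \<in> D \<longrightarrow> j < d \<longrightarrow> j \<in> D) \<longrightarrow> (m \<in> D \<longrightarrow> NN ?a ?x D \<le> 0)"
      proof (intro allI impI)
        fix D :: "'n set"
        assume dc: "\<forall>d j. d \<in> D \<longrightarrow> j < d \<longrightarrow> j \<in> D" and mD: "m \<in> D"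
        have "m \<in> D \<longrightarrow> NN ?a ?x D \<le> 0"
        proof (rule downset_induct[where P = "\<lambda>D. m \<in> D \<longrightarrow> NN ?a ?x D \<le> 0"])
          show "m \<in> {} \<longrightarrow> NN ?a ?x {} \<le> 0" by simp
        next
          fix b :: 'n
          assume IH: "m \<in> {..<b} \<longrightarrow> NN ?a ?x {..<b} \<le> 0"
          show "m \<in> {..b} \<longrightarrow> NN ?a ?x {..b} \<le> 0"
          proof
            assume "m \<in> {..b}"
            show "NN ?a ?x {..b} \<le> 0"
            proof (cases "b = m")
              case True
              then show ?thesis using N1 m3 by (simp add: NN_atMost algebra_simps)
            next
              case False
              then have "NN ?a ?x {..<b} \<le> 0" using IH \<open>m \<in> {..b}\<close> by auto
              moreover have "0 \<le> xb$b + 1" using a0 by (simp add: add_nonneg_nonneg)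
              ultimately have "(xb$b + 1) * NN ?a ?x {..<b} \<le> 0" by (simp add: mult_nonneg_nonpos)
              moreover have "0 \<le> x$b" using x0 by simp
              ultimately show ?thesis unfolding NN_atMost by linarith
            qed
          qed
        next
          fix d j assume "d \<in> D" "j < d" then show "j \<in> D" using dc by blast
        qed
        then show "NN ?a ?x D \<le> 0" using mD by blast
      qed
      from this[rule_format, of "{..<k}"] have "NN ?a ?x {..<k} \<le> 0" using greater by auto
      then have "xb$k * NN ?a ?x {..<k} \<le> 0" using a0 by (simp add: mult_nonneg_nonpos)
      then show ?thesis using x0 by (meson order_trans)
    qed
  qed
qed


theorem theorem1:
  fixes xb :: "real^'n::{finite,linorder}"
  assumes "xb \<in> nonneg_orthant" and "is_int_vec xb" and "xb \<noteq> 0"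
  shows "Qset nonneg_orthant xb =
    {x. (\<forall>i. 0 \<le> x$i) \<and>
        (\<forall>k. (\<Sum>i\<in>{..k}. lexcut_coeff xb k i * x$i) \<ge> (\<Sum>i\<in>{..k}. lexcut_coeff xb k i * xb$i))}"
    (is "_ = ?P")
proof -
  let ?a = "\<lambda>j. xb$j"
  have Q: "Qset nonneg_orthant xb = convex hull SS xb" unfolding Qset_def SS_def by simp
  have a0: "\<forall>i. 0 \<le> xb$i" using assms(1) unfolding nonneg_orthant_def by auto
  have xbS: "xb \<in> SS xb" using assms(1,2) unfolding SS_def lex_ge_def by simp
  have "convex hull SS xb \<subseteq> ?P"
  proof (rule hull_minimal)
    show "SS xb \<subseteq> ?P"
    proof
      fix x assume x: "x \<in> SS xb"
      then have "\<forall>i. 0 \<le> x$i" unfolding SS_def nonneg_orthant_def by auto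
      then show "x \<in> ?P" using SS_sub_P[OF assms(1,2) x] by auto
    qed
  next
    show "convex ?P"
    proof (rule convexI)
      fix x y and u v :: real
      assume x: "x \<in> ?P" and y: "y \<in> ?P" and u: "0 \<le> u" and v: "0 \<le> v" and uv: "u + v = 1"
      have nn: "\<forall>i. 0 \<le> (u *\<^sub>R x + v *\<^sub>R y)$i" using x y u v by auto
      have "\<forall>k. (\<Sum>i\<in>{..k}. lexcut_coeff xb k i * (u *\<^sub>R x + v *\<^sub>R y)$i) \<ge> (\<Sum>i\<in>{..k}. lexcut_coeff xb k i * xb$i)"
      proof
        fix k
        let ?B = "(\<Sum>i\<in>{..k}. lexcut_coeff xb k i * xb$i)"
        have e: "(\<Sum>i\<in>{..k}. lexcut_coeff xb k i * (u *\<^sub>R x + v *\<^sub>R y)$i) =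
          u * (\<Sum>i\<in>{..k}. lexcut_coeff xb k i * x$i) + v * (\<Sum>i\<in>{..k}. lexcut_coeff xb k i * y$i)"
          by (simp add: sum_distrib_left sum.distrib algebra_simps)
        have "u * ?B \<le> u * (\<Sum>i\<in>{..k}. lexcut_coeff xb k i * x$i)" using x u by (auto intro: mult_left_mono)
        moreover have "v * ?B \<le> v * (\<Sum>i\<in>{..k}. lexcut_coeff xb k i * y$i)" using y v by (auto intro: mult_left_mono)
        moreover have "u * ?B + v * ?B = ?B"
        proof -
          have "u * ?B + v * ?B = (u + v) * ?B" by (rule distrib_right[symmetric])
          then show ?thesis using uv by simp
        qed
        ultimately show "(\<Sum>i\<in>{..k}. lexcut_coeff xb k i * (u *\<^sub>R x + v *\<^sub>R y)$i) \<ge> ?B"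
          unfolding e by linarith
      qed
      then show "u *\<^sub>R x + v *\<^sub>R y \<in> ?P" using nn by blast
    qed
  qed
  moreover have "?P \<subseteq> convex hull SS xb"
  proof
    fix x assume x: "x \<in> ?P"
    let ?x = "\<lambda>j. x$j"
    have x0: "\<forall>i. 0 \<le> x$i" using x by blast
    have cut: "\<And>k. xb$k * NN ?a ?x {..<k} \<le> x$k" using x unfolding cut_iff[symmetric] by blast
    define mu where "mu D = max 0 (NN ?a ?x D)" for D
    define lam where "lam k = mu {..<k} - mu {..k}" for k
    define l0 where "l0 = mu UNIV"
    have mu_at: "\<And>k. mu {..k} = max 0 ((xb$k + 1) * NN ?a ?x {..<k} - x$k)"
      unfolding mu_def NN_atMost by simp
    have lam0: "\<And>k. 0 \<le> lam k"
    proof -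
      fix k
      have ak: "0 \<le> xb$k" "0 \<le> x$k" using a0 x0 by auto
      show "0 \<le> lam k"
      proof (cases "NN ?a ?x {..<k} \<le> 0")
        case True
        then have "(xb$k + 1) * NN ?a ?x {..<k} \<le> 0" using ak by (simp add: mult_nonneg_nonpos)
        then have "mu {..k} = 0" unfolding mu_at using ak by simp
        then show ?thesis unfolding lam_def mu_def by simp
      next
        case False
        then have "mu {..<k} = NN ?a ?x {..<k}" unfolding mu_def by simp
        moreover have "(xb$k + 1) * NN ?a ?x {..<k} - x$k \<le> NN ?a ?x {..<k}"
          using cut[of k] by (simp add: algebra_simps)
        ultimately show ?thesis unfolding lam_def mu_at using False by simp
      qed
    qed
    have tele: "\<And>D. (\<And>d j. d \<in> D \<Longrightarrow> j < d \<Longrightarrow> j \<in> D) \<Longrightarrow> sum lam D = 1 - mu D"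
    proof -
      fix D :: "'n set" assume dc: "\<And>d j. d \<in> D \<Longrightarrow> j < d \<Longrightarrow> j \<in> D"
      show "sum lam D = 1 - mu D"
      proof (rule downset_induct[where P = "\<lambda>D. sum lam D = 1 - mu D"])
        show "sum lam {} = 1 - mu {}" by (simp add: mu_def NN_empty)
      next
        fix b :: 'n assume IH: "sum lam {..<b} = 1 - mu {..<b}"
        have "sum lam {..b} = lam b + sum lam {..<b}" unfolding atMost_insert' by (subst sum.insert) auto
        then show "sum lam {..b} = 1 - mu {..b}" using IH unfolding lam_def by simp
      next
        fix d j assume "d \<in> D" "j < d" then show "j \<in> D" using dc by blast
      qed
    qed
    have l00: "0 \<le> l0" unfolding l0_def mu_def by simp
    have sumU: "sum lam UNIV = 1 - l0" unfolding l0_def by (rule tele) auto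
    define v where "v k = (\<chi> i. if i < k then xb$i else if i = k then xb$i + 1 else 0)" for k
    have vS: "\<And>k. v k \<in> SS xb"
    proof -
      fix k
      have "v k \<in> nonneg_orthant" using a0 unfolding v_def nonneg_orthant_def
        by (auto simp: add_nonneg_nonneg)
      moreover have "is_int_vec (v k)" using assms(2) unfolding v_def is_int_vec_def by auto
      moreover have "lex_less xb (v k)"
      proof -
        have "xb$k < v k $ k" "\<forall>j<k. xb$j = v k $ j" unfolding v_def by auto
        moreover then have "xb \<noteq> v k" by auto
        ultimately show ?thesis unfolding lex_less_def by blast
      qed
      ultimately show "v k \<in> SS xb" unfolding SS_def lex_ge_def by simp
    qed
    define z where "z = l0 *\<^sub>R xb + (\<Sum>k\<in>UNIV. lam k *\<^sub>R v k)"
    define g where "g w = (case w of None \<Rightarrow> l0 | Some k \<Rightarrow> lam k)" for w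
    define yy where "yy w = (case w of None \<Rightarrow> xb | Some k \<Rightarrow> v k)" for w
    have "(\<Sum>j\<in>UNIV. g j *\<^sub>R yy j) \<in> convex hull SS xb"
    proof (rule convex_sum)
      show "finite (UNIV :: 'n option set)" by simp
      show "convex (convex hull SS xb)" by simp
      show "sum g UNIV = 1" unfolding sum_UNIV_option g_def using sumU by simp
      fix i :: "'n option"
      show "0 \<le> g i" unfolding g_def using l00 lam0 by (cases i) auto
      show "yy i \<in> convex hull SS xb" unfolding yy_def using xbS vS hull_subset[of "SS xb" convex]
        by (cases i) (auto)
    qed
    moreover have "(\<Sum>j\<in>UNIV. g j *\<^sub>R yy j) = z"
      unfolding sum_UNIV_option z_def g_def yy_def by simp
    ultimately have zC: "z \<in> convex hull SS xb" by simp
    have zle: "\<forall>i. 0 \<le> (x - z)$i"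
    proof
      fix i
      have vi: "\<And>k. lam k * (v k $ i) = (if k \<in> {i<..} then lam k * xb$i else 0) + (if k = i then lam k * (xb$i + 1) else 0)"
        unfolding v_def by auto
      have "z$i = l0 * xb$i + (\<Sum>k\<in>UNIV. lam k * (v k $ i))" unfolding z_def by (simp add: sum_component)
      also have "(\<Sum>k\<in>UNIV. lam k * (v k $ i)) = (\<Sum>k\<in>{i<..}. lam k) * xb$i + lam i * (xb$i + 1)"
        unfolding vi sum.distrib by (simp add: sum.If_cases sum_distrib_right greaterThan_def)
      also have "(\<Sum>k\<in>{i<..}. lam k) = sum lam UNIV - sum lam {..i}"
      proof -
        have "{i<..} = UNIV - {..i}" by auto
        then show ?thesis by (simp add: sum_diff)
      qed
      also have "sum lam {..i} = 1 - mu {..i}" by (rule tele) auto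
      finally have zi: "z$i = l0 * xb$i + (1 - l0 - (1 - mu {..i})) * xb$i + lam i * (xb$i + 1)"
        using sumU by simp
      have "z$i \<le> x$i"
      proof (cases "NN ?a ?x {..<i} \<le> 0")
        case True
        then have "mu {..<i} = 0" unfolding mu_def by simp
        then have "z$i = - mu {..i}" unfolding zi lam_def by (simp add: algebra_simps)
        moreover have "0 \<le> mu {..i}" unfolding mu_def by simp
        moreover have "0 \<le> x$i" using x0 by simp
        ultimately show ?thesis by linarith
      next
        case False
        then have m1: "mu {..<i} = NN ?a ?x {..<i}" unfolding mu_def by simp
        have "z$i = (xb$i + 1) * NN ?a ?x {..<i} - mu {..i}" unfolding zi lam_def m1 by (simp add: algebra_simps)
        moreover have "(xb$i + 1) * NN ?a ?x {..<i} - x$i \<le> mu {..i}" unfolding mu_at by simp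
        ultimately show ?thesis by simp
      qed
      then show "0 \<le> (x - z)$i" by simp
    qed
    have "z + (x - z) \<in> convex hull SS xb" by (rule C_up[OF zC zle])
    then show "x \<in> convex hull SS xb" by simp
  qed
  ultimately show ?thesis unfolding Q by blast
qed

end
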